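(* Let $\mathbb{K}\in\{\mathbb{R},\mathbb{C}\}$, let $\omega=\mathbb{K}^{\mathbb{N}}$ be the product of countably many copies of $\mathbb{K}$ with the product topology, and let $T:\omega\to\omega$ be a continuous linear operator. Then the following conditions are equivalent: (1) the dual operator $T'$ has no non-trivial finite dimensional invariant subspaces; (2) $T$ is hypercyclic; (3) $T$ is hereditarily hypercyclic; (4) for any sequence $\{p_k\}_{k\in\mathbb{N}}$ of polynomials with coefficients in $\mathbb{K}$ such that $\deg p_k\to\infty$, there is $x\in\omega$ such that $\{p_k(T)x:k\in\mathbb{N}\}$ is dense in $\omega$.
   Context: $\omega'$ denotes the space of continuous linear functionals on $\omega$, and the dual operator $T':\omega'\to\omega'$ is $(T'f)(x)=f(Tx)$. A non-trivial subspace means a subspace different from $\{0\}$; a subspace $L$ is invariant for $T'$ if $T'(L)\subseteq L$. $T$ is hypercyclic if there is $x\in\omega$ with $\{T^nx:n\in\mathbb{N}\}$ dense in $\omega$. $T$ is hereditarily hypercyclic if for each infinite subset $A\subseteq\mathbb{N}$ there is $x\in\omega$ such that $\{T^nx:n\in A\}$ is dense in $\omega$. *)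

theory Defs
  imports "HOL-Analysis.Analysis" "HOL-Computational_Algebra.Polynomial"
begin

text \<open>omega = K^N is the function type nat => K, carrying the product topology
  (instance from HOL-Analysis Function_Topology). K is real or complex;
  linearity is K-linearity, written pointwise.\<close>

definition klinear :: "((nat \<Rightarrow> 'a::real_normed_field) \<Rightarrow> 'a) \<Rightarrow> bool" where
  "klinear f \<longleftrightarrow> (\<forall>x y. f (\<lambda>n. x n + y n) = f x + f y) \<and>
                   (\<forall>c x. f (\<lambda>n. c * x n) = c * f x)"

definition klinear_op :: "((nat \<Rightarrow> 'a::real_normed_field) \<Rightarrow> (nat \<Rightarrow> 'a)) \<Rightarrow> bool" where
  "klinear_op T \<longleftrightarrow> (\<forall>x y. T (\<lambda>n. x n + y n) = (\<lambda>n. T x n + T y n)) \<and>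
                   (\<forall>c x. T (\<lambda>n. c * x n) = (\<lambda>n. c * T x n))"

definition dual_space :: "((nat \<Rightarrow> 'a::real_normed_field) \<Rightarrow> 'a) set" where
  "dual_space = {f. klinear f \<and> continuous_on UNIV f}"

definition dual_op :: "((nat \<Rightarrow> 'a) \<Rightarrow> (nat \<Rightarrow> 'a)) \<Rightarrow> ((nat \<Rightarrow> 'a) \<Rightarrow> 'a) \<Rightarrow> ((nat \<Rightarrow> 'a) \<Rightarrow> 'a)" where
  "dual_op T f = (\<lambda>x. f (T x))"

definition kspan :: "((nat \<Rightarrow> 'a::real_normed_field) \<Rightarrow> 'a) set \<Rightarrow> ((nat \<Rightarrow> 'a) \<Rightarrow> 'a) set" where
  "kspan B = {f. \<exists>F c. finite F \<and> F \<subseteq> B \<and> f = (\<lambda>x. \<Sum>g\<in>F. c g * g x)}"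

definition dual_subspace :: "((nat \<Rightarrow> 'a::real_normed_field) \<Rightarrow> 'a) set \<Rightarrow> bool" where
  "dual_subspace L \<longleftrightarrow> L \<subseteq> dual_space \<and> (\<lambda>x. 0) \<in> L \<and>
     (\<forall>f\<in>L. \<forall>g\<in>L. (\<lambda>x. f x + g x) \<in> L) \<and>
     (\<forall>c. \<forall>f\<in>L. (\<lambda>x. c * f x) \<in> L)"

definition finite_dim :: "((nat \<Rightarrow> 'a::real_normed_field) \<Rightarrow> 'a) set \<Rightarrow> bool" where
  "finite_dim L \<longleftrightarrow> (\<exists>B. finite B \<and> L \<subseteq> kspan B)"

definition no_fin_dim_dual_invariant :: "((nat \<Rightarrow> 'a::real_normed_field) \<Rightarrow> (nat \<Rightarrow> 'a)) \<Rightarrow> bool" where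
  "no_fin_dim_dual_invariant T \<longleftrightarrow>
     \<not> (\<exists>L. dual_subspace L \<and> finite_dim L \<and> L \<noteq> {(\<lambda>x. 0)} \<and> dual_op T ` L \<subseteq> L)"

definition hypercyclic :: "((nat \<Rightarrow> 'a::real_normed_field) \<Rightarrow> (nat \<Rightarrow> 'a)) \<Rightarrow> bool" where
  "hypercyclic T \<longleftrightarrow> (\<exists>x. closure {(T ^^ n) x | n. True} = UNIV)"

definition hereditarily_hypercyclic :: "((nat \<Rightarrow> 'a::real_normed_field) \<Rightarrow> (nat \<Rightarrow> 'a)) \<Rightarrow> bool" where
  "hereditarily_hypercyclic T \<longleftrightarrow>
     (\<forall>A::nat set. infinite A \<longrightarrow> (\<exists>x. closure {(T ^^ n) x | n. n \<in> A} = UNIV))"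

definition poly_op :: "'a::real_normed_field poly \<Rightarrow> ((nat \<Rightarrow> 'a) \<Rightarrow> (nat \<Rightarrow> 'a)) \<Rightarrow> (nat \<Rightarrow> 'a) \<Rightarrow> (nat \<Rightarrow> 'a)" where
  "poly_op p T x = (\<lambda>m. \<Sum>i\<le>degree p. coeff p i * (T ^^ i) x m)"

definition poly_seq_dense :: "((nat \<Rightarrow> 'a::real_normed_field) \<Rightarrow> (nat \<Rightarrow> 'a)) \<Rightarrow> bool" where
  "poly_seq_dense T \<longleftrightarrow>
     (\<forall>p :: nat \<Rightarrow> 'a poly. filterlim (\<lambda>k. degree (p k)) at_top sequentially \<longrightarrow>
        (\<exists>x. closure {poly_op (p k) T x | k. True} = UNIV))"

end

theory Submission
  imports Defs "HOL-Library.Function_Algebras" "HOL-Computational_Algebra.Fundamental_Theorem_Algebra"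
begin

lemma nat_antimono_stabilizes:
  fixes f :: "nat \<Rightarrow> nat"
  assumes "\<And>n. f (Suc n) \<le> f n"
  shows "\<exists>n0. \<forall>n\<ge>n0. f n = f n0"
proof -
  let ?m = "LEAST v. \<exists>n. f n = v"
  obtain n0 where n0: "f n0 = ?m" using LeastI_ex[of "\<lambda>v. \<exists>n. f n = v"] by blast
  have "f n = f n0" if "n \<ge> n0" for n
  proof -
    have "f n \<le> f n0" using that assms by (induction rule: dec_induct) (auto intro: order_trans)
    moreover have "?m \<le> f n" by (auto intro: Least_le)
    ultimately show ?thesis using n0 by simp
  qed
  then show ?thesis by blast
qed

context vector_space
begin

lemma fin_basis:
  assumes "V \<subseteq> span F" "finite F"
  obtains B where "B \<subseteq> V" "independent B" "V \<subseteq> span B" "card B = dim V" "finite B"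
proof -
  obtain B where B: "B \<subseteq> V" "independent B" "V \<subseteq> span B" "card B = dim V"
    using basis_exists by blast
  then have "finite B" using independent_span_bound[OF assms(2), of B] assms(1) by blast
  then show ?thesis using B that by blast
qed

lemma fin_dim_mono:
  assumes "X \<subseteq> Y" "Y \<subseteq> span F" "finite F"
  shows "dim X \<le> dim Y"
proof -
  obtain B where B: "B \<subseteq> Y" "independent B" "Y \<subseteq> span B" "card B = dim Y" "finite B"
    using fin_basis[OF assms(2,3)] by blast
  then show ?thesis using dim_le_card[of X B] assms(1) by auto
qed

lemma fin_subspace_dim_equal:
  assumes "subspace S" "subspace T" "S \<subseteq> T" "dim S \<ge> dim T" "T \<subseteq> span F" "finite F"
  shows "S = T"
proof -
  obtain B where B: "B \<subseteq> S" "independent B" "S \<subseteq> span B" "card B = dim S" "finite B"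
    using fin_basis[of S F] assms by blast
  obtain C where C: "B \<subseteq> C" "C \<subseteq> T" "independent C" "T \<subseteq> span C"
    using maximal_independent_subset_extend[of B T] B assms by blast
  have "finite C" using independent_span_bound[OF assms(6) C(3)] C assms by blast
  have "card C = dim T" using basis_card_eq_dim[OF C(2,4,3)] .
  then have "card C \<le> card B" using B assms by simp
  then have "B = C" using card_seteq[OF \<open>finite C\<close> C(1)] by simp
  then have "T \<subseteq> S" using C(4) span_minimal[OF B(1) assms(1)] by blast
  then show ?thesis using assms by blast
qed

end

locale keyloc = vector_space scale
  for scale :: "'a::field \<Rightarrow> 'b::ab_group_add \<Rightarrow> 'b" (infixr \<open>*s\<close> 75) +
  fixes A :: "'b \<Rightarrow> 'b" and Dom :: "'b set" and E0 :: "'b set"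
  assumes Aadd: "\<And>x y. A (x + y) = A x + A y"
    and Ascale: "\<And>c x. A (c *s x) = c *s A x"
    and Dom: "subspace Dom" "A ` Dom \<subseteq> Dom"
    and E0: "finite E0" "E0 \<subseteq> Dom"
    and noinv: "\<And>L F. subspace L \<Longrightarrow> finite F \<Longrightarrow> L \<subseteq> span F \<Longrightarrow> A ` L \<subseteq> L \<Longrightarrow> L \<subseteq> Dom \<Longrightarrow> L \<subseteq> {0}"
begin

lemma Ahom: "module_hom scale scale A"
  by (simp add: module_hom_def module_hom_axioms_def Aadd Ascale module_axioms)

lemma A_span: "A ` span S = span (A ` S)"
  using module_hom.span_image[OF Ahom] by simp

lemma Apow_add: "(A^^i) (x + y) = (A^^i) x + (A^^i) y"
  by (induction i) (auto simp: Aadd)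

lemma Apow_scale: "(A^^i) (c *s x) = c *s (A^^i) x"
  by (induction i) (auto simp: Ascale)

lemma Apow_hom: "module_hom scale scale (A^^i)"
  by (simp add: module_hom_def module_hom_axioms_def Apow_add Apow_scale module_axioms)

lemma Apow_sum: "(A^^i) (sum g S) = (\<Sum>x\<in>S. (A^^i) (g x))"
  using module_hom.sum[OF Apow_hom] .

fun W :: "nat \<Rightarrow> 'b set" where
  "W 0 = span E0"
| "W (Suc n) = span (W n \<union> A ` W n)"

lemma W_subspace: "subspace (W n)"
  by (cases n) auto

lemma W_Suc_mono: "W n \<subseteq> W (Suc n)"
  by (auto intro: span_superset[THEN subsetD])

lemma W_mono: "m \<le> n \<Longrightarrow> W m \<subseteq> W n"
  by (induction rule: dec_induct) (use W_Suc_mono in blast)+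

lemma W_A: "v \<in> W n \<Longrightarrow> A v \<in> W (Suc n)"
  by (auto intro: span_superset[THEN subsetD])

lemma W_Apow: "v \<in> W n \<Longrightarrow> (A^^j) v \<in> W (n + j)"
proof (induction j)
  case (Suc j)
  then show ?case using W_A[of "(A^^j) v" "n + j"] by simp
qed simp

lemma W_fin: "\<exists>F. finite F \<and> W n = span F"
proof (induction n)
  case 0 then show ?case using E0 by auto
next
  case (Suc n)
  then obtain F where F: "finite F" "W n = span F" by blast
  have "W (Suc n) = span (F \<union> A ` F)"
  proof
    show "W (Suc n) \<subseteq> span (F \<union> A ` F)"
      unfolding W.simps F(2)
    proof (rule span_minimal)
      show "span F \<union> A ` span F \<subseteq> span (F \<union> A ` F)"
        using span_mono[of F "F \<union> A ` F"] span_mono[of "A ` F" "F \<union> A ` F"] A_span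
        by (metis Un_least Un_upper1 Un_upper2)
      show "subspace (span (F \<union> A ` F))" by simp
    qed
    show "span (F \<union> A ` F) \<subseteq> W (Suc n)"
      unfolding W.simps F(2) by (rule span_mono) (auto intro: span_superset[THEN subsetD])
  qed
  then show ?case using F by blast
qed

lemma W_Dom: "W n \<subseteq> Dom"
proof (induction n)
  case 0 then show ?case using E0 Dom span_minimal by auto
next
  case (Suc n)
  then have "W n \<union> A ` W n \<subseteq> Dom" using Dom by auto
  then show ?case using Dom span_minimal by simp
qed

end

context keyloc begin

lemma count:
  assumes "subspace X" "subspace Y" "X \<subseteq> Y" "A ` X \<subseteq> Y" "Y \<subseteq> span F" "finite F"
  shows "dim (span (Y \<union> A ` Y)) + dim {v\<in>Y. A v \<in> Y} \<le> 2 * dim Y"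
proof -
  define S where "S = {v\<in>Y. A v \<in> Y}"
  have "S \<subseteq> Y" unfolding S_def by auto
  obtain BS where BS: "BS \<subseteq> S" "independent BS" "S \<subseteq> span BS" "card BS = dim S" "finite BS"
    using fin_basis[of S F] assms \<open>S \<subseteq> Y\<close> by blast
  obtain BY where BY: "BS \<subseteq> BY" "BY \<subseteq> Y" "independent BY" "Y \<subseteq> span BY"
    using maximal_independent_subset_extend[of BS Y] BS \<open>S \<subseteq> Y\<close> by blast
  have "finite BY" using independent_span_bound[OF assms(6) BY(3)] BY assms by blast
  have cBY: "card BY = dim Y" using basis_card_eq_dim[OF BY(2,4,3)] .
  let ?R = "BY \<union> A ` (BY - BS)"
  have AB: "A ` BY \<subseteq> span ?R"
  proof
    fix w assume "w \<in> A ` BY"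
    then obtain b where b: "b \<in> BY" "w = A b" by blast
    show "w \<in> span ?R"
    proof (cases "b \<in> BS")
      case True
      then have "A b \<in> Y" using BS(1) unfolding S_def by auto
      then have "A b \<in> span BY" using BY(4) by auto
      then show ?thesis using b span_mono[of BY ?R] by auto
    next
      case False
      then show ?thesis using b span_superset[of ?R] by auto
    qed
  qed
  have "span (Y \<union> A ` Y) \<subseteq> span ?R"
  proof (rule span_minimal)
    have "Y \<subseteq> span ?R" using BY(4) span_mono[of BY ?R] by auto
    moreover have "A ` Y \<subseteq> span ?R"
    proof -
      have "A ` Y \<subseteq> A ` span BY" using BY(4) by auto
      also have "\<dots> = span (A ` BY)" by (rule A_span)
      also have "\<dots> \<subseteq> span ?R" using AB span_minimal subspace_span by blast
      finally show ?thesis .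
    qed
    ultimately show "Y \<union> A ` Y \<subseteq> span ?R" by blast
  qed simp
  then have "dim (span (Y \<union> A ` Y)) \<le> card ?R"
    using dim_le_card[of "span (Y \<union> A ` Y)" ?R] \<open>finite BY\<close> by auto
  also have "\<dots> \<le> card BY + card (A ` (BY - BS))" by (rule card_Un_le)
  also have "\<dots> \<le> card BY + card (BY - BS)" using card_image_le[of "BY - BS" A] \<open>finite BY\<close> by simp
  also have "\<dots> = card BY + (card BY - card BS)"
    using card_Diff_subset[OF BS(5) BY(1)] by simp
  finally show ?thesis using cBY BS(4) card_mono[OF \<open>finite BY\<close> BY(1)] unfolding S_def by linarith
qed

lemma W_fin': obtains F where "finite F" "W n \<subseteq> span F"
  using W_fin by blast

definition dd :: "nat \<Rightarrow> nat" where "dd n = dim (W (Suc n)) - dim (W n)"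

lemma dimW_mono: "m \<le> n \<Longrightarrow> dim (W m) \<le> dim (W n)"
  using W_fin'[of n] fin_dim_mono W_mono by metis

lemma Azero: "A 0 = 0" using Ascale[of 0 0] by simp

lemma S_subspace: "subspace {v\<in>W (Suc n). A v \<in> W (Suc n)}"
  unfolding subspace_def using W_subspace[of "Suc n"]
  by (auto simp: subspace_def Aadd Ascale Azero)

lemma count_W: "dim (W (Suc (Suc n))) + dim {v\<in>W (Suc n). A v \<in> W (Suc n)} \<le> 2 * dim (W (Suc n))"
proof -
  obtain F where "finite F" "W (Suc n) \<subseteq> span F" using W_fin' by blast
  moreover have "A ` W n \<subseteq> W (Suc n)" using W_A by blast
  ultimately have "dim (span (W (Suc n) \<union> A ` W (Suc n))) + dim {v\<in>W (Suc n). A v \<in> W (Suc n)} \<le> 2 * dim (W (Suc n))"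
    using count[OF W_subspace W_subspace W_Suc_mono] by blast
  then show ?thesis by (simp only: W.simps(2)[of "Suc n"])
qed

lemma dd_antimono: "dd (Suc n) \<le> dd n"
proof -
  have "W n \<subseteq> {v\<in>W (Suc n). A v \<in> W (Suc n)}" using W_Suc_mono W_A by blast
  moreover obtain F where "finite F" "W (Suc n) \<subseteq> span F" using W_fin' by blast
  ultimately have "dim (W n) \<le> dim {v\<in>W (Suc n). A v \<in> W (Suc n)}"
    using fin_dim_mono[of "W n" _ F] by blast
  then show ?thesis using count_W[of n] dimW_mono[of n "Suc n"] dimW_mono[of "Suc n" "Suc (Suc n)"]
    unfolding dd_def by linarith
qed

lemma stab_exists: "\<exists>n0. \<forall>n\<ge>n0. \<forall>v. v \<in> W (Suc n) \<longrightarrow> A v \<in> W (Suc n) \<longrightarrow> v \<in> W n"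
proof -
  obtain n0 where n0: "\<forall>n\<ge>n0. dd n = dd n0" using nat_antimono_stabilizes[of dd] dd_antimono by blast
  have "v \<in> W n" if "n \<ge> n0" "v \<in> W (Suc n)" "A v \<in> W (Suc n)" for n v
  proof -
    let ?S = "{v\<in>W (Suc n). A v \<in> W (Suc n)}"
    have e1: "dd n = dd n0" using n0 that(1) by blast
    have e2: "dd (Suc n) = dd n0" using n0 that(1) le_SucI by blast
    have eq: "dd (Suc n) = dd n" using e1 e2 by linarith
    have sub: "W n \<subseteq> ?S" using W_Suc_mono W_A by blast
    obtain F where F: "finite F" "W (Suc n) \<subseteq> span F" using W_fin' by blast
    have "?S \<subseteq> span F" using F by auto
    have "dim ?S \<le> dim (W n)"
      using count_W[of n] eq dimW_mono[of n "Suc n"] dimW_mono[of "Suc n" "Suc (Suc n)"]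
      unfolding dd_def by linarith
    then have "W n = ?S"
      using fin_subspace_dim_equal[OF W_subspace S_subspace sub _ \<open>?S \<subseteq> span F\<close> F(1)] by simp
    then show ?thesis using that by blast
  qed
  then show ?thesis by blast
qed

end

context keyloc begin

definition polyA :: "'a poly \<Rightarrow> 'b \<Rightarrow> 'b" where
  "polyA p h = (\<Sum>i\<le>degree p. coeff p i *s (A^^i) h)"

definition stab :: "nat \<Rightarrow> bool" where
  "stab n0 \<longleftrightarrow> (\<forall>n\<ge>n0. \<forall>v. v \<in> W (Suc n) \<longrightarrow> A v \<in> W (Suc n) \<longrightarrow> v \<in> W n)"

lemma P1:
  assumes "stab n0" "n \<ge> n0" "v \<in> W (Suc n)" "v \<notin> W n"
  shows "(A^^i) v \<in> W (Suc n + i) \<and> (A^^i) v \<notin> W (n + i)"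
proof (induction i)
  case 0 then show ?case using assms by simp
next
  case (Suc i)
  let ?u = "(A^^i) v"
  have "A ?u \<in> W (Suc (Suc n + i))" using Suc W_A by blast
  moreover have "A ?u \<notin> W (Suc (n + i))"
    using Suc assms(1,2) unfolding stab_def by (metis add_Suc le_add1 le_trans plus_1_eq_Suc)
  ultimately show ?case by simp
qed

lemma P2:
  assumes "stab n0" "n \<ge> n0" "v \<in> W (Suc n)" "v \<notin> W n" "p \<noteq> 0"
  shows "polyA p v \<notin> W (n + degree p)"
proof
  assume pin: "polyA p v \<in> W (n + degree p)"
  let ?m = "degree p"
  have split: "polyA p v = (\<Sum>i<?m. coeff p i *s (A^^i) v) + coeff p ?m *s (A^^?m) v"
    unfolding polyA_def using sum.lessThan_Suc[of "\<lambda>i. coeff p i *s (A^^i) v" ?m]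
    by (simp add: lessThan_Suc_atMost)
  have rest: "(\<Sum>i<?m. coeff p i *s (A^^i) v) \<in> W (n + ?m)"
  proof (rule subspace_sum[OF W_subspace])
    fix i assume "i \<in> {..<?m}"
    then have "Suc n + i \<le> n + ?m" by auto
    then have "(A^^i) v \<in> W (n + ?m)" using P1[OF assms(1-4), of i] W_mono by blast
    then show "coeff p i *s (A^^i) v \<in> W (n + ?m)" using subspace_scale[OF W_subspace] by blast
  qed
  have "coeff p ?m *s (A^^?m) v \<in> W (n + ?m)"
    using subspace_diff[OF W_subspace pin rest] split by (metis add_diff_cancel_left')
  then have "inverse (coeff p ?m) *s (coeff p ?m *s (A^^?m) v) \<in> W (n + ?m)"
    using subspace_scale[OF W_subspace] by blast
  then have "(A^^?m) v \<in> W (n + ?m)" using assms(5) by (simp add: scale_scale)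
  then show False using P1[OF assms(1-4), of ?m] by blast
qed

lemma Apow_comm: "(A^^J) ((A^^i) h) = (A^^i) ((A^^J) h)"
proof -
  have "(A^^(J+i)) h = (A^^J) ((A^^i) h)" by (simp add: funpow_add)
  moreover have "(A^^(i+J)) h = (A^^i) ((A^^J) h)" by (simp add: funpow_add)
  ultimately show ?thesis by (simp add: add.commute)
qed

lemma Apow_polyA: "(A^^J) (polyA p h) = polyA p ((A^^J) h)"
  unfolding polyA_def Apow_sum Apow_scale Apow_comm ..

definition Z :: "nat \<Rightarrow> nat \<Rightarrow> 'b set" where
  "Z N J = {h \<in> W N. \<forall>j\<le>J. (A^^j) h \<in> W N}"

lemma Z_subspace: "subspace (Z N J)"
  unfolding subspace_def Z_def using W_subspace[of N]
  by (auto simp: subspace_def Apow_add Apow_scale module_hom.zero[OF Apow_hom])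

lemma escape: "\<exists>J1. \<forall>h\<in>W N. h \<noteq> 0 \<longrightarrow> (\<exists>j\<le>J1. (A^^j) h \<notin> W N)"
proof -
  obtain F where F: "finite F" "W N \<subseteq> span F" using W_fin' by blast
  have ZW: "Z N J \<subseteq> W N" for J unfolding Z_def by auto
  have Zanti: "Z N (Suc J) \<subseteq> Z N J" for J unfolding Z_def by auto
  have "dim (Z N (Suc J)) \<le> dim (Z N J)" for J
    using fin_dim_mono[OF Zanti, where F=F] ZW[of J] F by blast
  then obtain J1 where J1: "\<forall>J\<ge>J1. dim (Z N J) = dim (Z N J1)"
    using nat_antimono_stabilizes[of "\<lambda>J. dim (Z N J)"] by blast
  have eqZ: "Z N (Suc J1) = Z N J1"
    by (rule fin_subspace_dim_equal[OF Z_subspace Z_subspace Zanti, where F=F])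
       (use J1[rule_format, of "Suc J1"] ZW[of J1] F in auto)
  have inv: "A ` Z N J1 \<subseteq> Z N J1"
  proof
    fix w assume "w \<in> A ` Z N J1"
    then obtain h where h: "h \<in> Z N (Suc J1)" "w = A h" using eqZ by blast
    have hz: "\<forall>j\<le>Suc J1. (A^^j) h \<in> W N" using h unfolding Z_def by blast
    have "(A^^j) w \<in> W N" if "j \<le> J1" for j
    proof -
      have "(A^^j) w = (A^^(Suc j)) h" using h(2) funpow_Suc_right[of j A] by simp
      moreover have "(A^^(Suc j)) h \<in> W N" using hz that Suc_le_mono by blast
      ultimately show ?thesis by simp
    qed
    moreover have "w \<in> W N" using hz[rule_format, of 1] h(2) by simp
    ultimately show "w \<in> Z N J1" unfolding Z_def by auto
  qed
  have "Z N J1 \<subseteq> {0}"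
    using noinv[OF Z_subspace F(1) _ inv] ZW F W_Dom by blast
  then show ?thesis unfolding Z_def by blast
qed

end

context keyloc begin

lemma key: "\<exists>D. \<forall>p h. degree p \<ge> D \<longrightarrow> h \<in> span E0 \<longrightarrow> polyA p h \<in> span E0 \<longrightarrow> h = 0"
proof -
  obtain n0 where st: "stab n0" using stab_exists unfolding stab_def by blast
  obtain J1 where J1: "\<forall>h\<in>W n0. h \<noteq> 0 \<longrightarrow> (\<exists>j\<le>J1. (A^^j) h \<notin> W n0)"
    using escape by blast
  have "h = 0" if deg: "degree p \<ge> Suc J1" and h: "h \<in> span E0" and ph: "polyA p h \<in> span E0" for p h
  proof (rule ccontr)
    assume h0: "h \<noteq> 0"
    have "h \<in> W 0" using h by simp
    then have "h \<in> W n0" using W_mono by blast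
    then obtain j where j: "j \<le> J1" "(A^^j) h \<notin> W n0" using J1 h0 by blast
    let ?v = "(A^^j) h"
    have vW: "?v \<in> W j" using W_Apow[OF \<open>h \<in> W 0\<close>, of j] by simp
    define k where "k = (LEAST k. ?v \<in> W k)"
    have vk: "?v \<in> W k" unfolding k_def using vW by (rule LeastI)
    have "\<not> k \<le> n0" using vk j(2) W_mono by blast
    then obtain n1 where n1: "k = Suc n1" "n1 \<ge> n0" by (metis Suc_le_D not_le_imp_less Suc_leI)
    have vn1: "?v \<notin> W n1" using not_less_Least[of n1 "\<lambda>k. ?v \<in> W k"] n1 unfolding k_def by auto
    have P: "(A^^(J1 - j)) ?v \<in> W (Suc n1 + (J1 - j)) \<and> (A^^(J1 - j)) ?v \<notin> W (n1 + (J1 - j))"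
      using P1[OF st n1(2) _ vn1] vk n1(1) by blast
    have eqv: "(A^^(J1 - j)) ?v = (A^^J1) h"
    proof -
      have "(A^^(J1 - j)) ?v = (A^^(J1 - j + j)) h" by (simp add: funpow_add)
      then show ?thesis using j(1) by simp
    qed
    let ?n' = "n1 + (J1 - j)"
    have "?n' \<ge> n0" using n1 by simp
    have "p \<noteq> 0" using deg by auto
    have notin: "polyA p ((A^^J1) h) \<notin> W (?n' + degree p)"
      using P2[OF st \<open>?n' \<ge> n0\<close> _ _ \<open>p \<noteq> 0\<close>] P eqv by simp
    have "polyA p ((A^^J1) h) = (A^^J1) (polyA p h)" using Apow_polyA by simp
    moreover have "(A^^J1) (polyA p h) \<in> W (0 + J1)" using W_Apow[of "polyA p h" 0 J1] ph by simp
    moreover have "W (0 + J1) \<subseteq> W (?n' + degree p)" using deg W_mono by simp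
    ultimately show False using notin by auto
  qed
  then show ?thesis by blast
qed

end

interpretation VS: vector_space "(\<lambda>c f x. c * f x) :: 'a::field \<Rightarrow> ((nat\<Rightarrow>'a)\<Rightarrow>'a) \<Rightarrow> ((nat\<Rightarrow>'a)\<Rightarrow>'a)"
  by unfold_locales (auto simp: fun_eq_iff algebra_simps)

lemma sum_fun_app: "(\<Sum>i\<in>S. g i) x = (\<Sum>i\<in>S. g i x)"
  by (induction S rule: infinite_finite_induct) auto

lemma klinear_zero: "klinear f \<Longrightarrow> f (\<lambda>n. 0) = 0"
proof -
  assume "klinear f"
  then have "f (\<lambda>n. 0 * (0::nat\<Rightarrow>'a) n) = 0 * f 0" unfolding klinear_def by blast
  then show ?thesis by simp
qed

lemma klinear_sum:
  assumes "klinear f"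
  shows "f (\<lambda>n. \<Sum>i\<in>S. y i n) = (\<Sum>i\<in>S. f (y i))"
proof (induction S rule: infinite_finite_induct)
  case (infinite S) then show ?case using klinear_zero[OF assms] by simp
next
  case empty then show ?case using klinear_zero[OF assms] by simp
next
  case (insert i S)
  have "f (\<lambda>n. \<Sum>i\<in>insert i S. y i n) = f (\<lambda>n. y i n + (\<Sum>i\<in>S. y i n))"
    using insert by simp
  also have "\<dots> = f (y i) + f (\<lambda>n. \<Sum>i\<in>S. y i n)"
    using assms unfolding klinear_def by (metis (no_types))
  finally show ?case using insert by simp
qed

lemma klinear_scale: "klinear f \<Longrightarrow> f (\<lambda>n. c * x n) = c * f x"
  unfolding klinear_def by blast

lemma klinear_add: "klinear f \<Longrightarrow> f (\<lambda>n. x n + y n) = f x + f y"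
  unfolding klinear_def by blast

lemma dual_space_subspace: "VS.subspace (dual_space :: ((nat\<Rightarrow>'a::real_normed_field)\<Rightarrow>'a) set)"
proof -
  have z: "(0 :: (nat\<Rightarrow>'a)\<Rightarrow>'a) \<in> dual_space"
    unfolding dual_space_def by (simp add: klinear_def zero_fun_def continuous_on_const)
  have a: "f + g \<in> dual_space" if "f \<in> dual_space" "g \<in> dual_space" for f g :: "(nat\<Rightarrow>'a)\<Rightarrow>'a"
    using that unfolding dual_space_def
    by (auto simp: klinear_def plus_fun_def algebra_simps intro!: continuous_intros)
  have s: "(\<lambda>x. c * f x) \<in> dual_space" if "f \<in> dual_space" for c and f :: "(nat\<Rightarrow>'a)\<Rightarrow>'a"
    using that unfolding dual_space_def
    by (auto simp: klinear_def algebra_simps intro!: continuous_intros)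
  show ?thesis unfolding VS.subspace_def using z a s by blast
qed

lemma dual_op_space:
  assumes "klinear_op T" "continuous_on UNIV T" "f \<in> dual_space"
  shows "dual_op T f \<in> dual_space"
proof -
  have "klinear (\<lambda>x. f (T x))"
    using assms unfolding klinear_def klinear_op_def dual_space_def by simp
  moreover have "continuous_on UNIV (\<lambda>x. f (T x))"
  proof -
    have "continuous_on UNIV f" using assms(3) unfolding dual_space_def by simp
    then show ?thesis using continuous_on_compose[OF assms(2), of f] continuous_on_subset[of UNIV f "range T"] by (simp add: comp_def)
  qed
  ultimately show ?thesis unfolding dual_op_def dual_space_def by simp
qed

lemma VS_span_kspan: "VS.span F \<subseteq> kspan F"
proof
  fix f assume "f \<in> VS.span F"
  then obtain t r where "finite t" "t \<subseteq> F" "f = (\<Sum>a\<in>t. (\<lambda>x. r a * a x))"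
    unfolding VS.span_explicit by blast
  then show "f \<in> kspan F" unfolding kspan_def
    by (intro CollectI exI[of _ t] exI[of _ r]) (auto simp: fun_eq_iff sum_fun_app)
qed

lemma coord_dual: "(\<lambda>x. x j) \<in> dual_space"
  unfolding dual_space_def klinear_def by (auto intro: continuous_on_product_coordinates)

lemma dual_op_pow: "(dual_op T ^^ i) h = (\<lambda>x. h ((T^^i) x))"
proof (induction i arbitrary: h)
  case 0 then show ?case by simp
next
  case (Suc i)
  have "(dual_op T ^^ Suc i) h = (\<lambda>x. ((dual_op T^^i) h) (T x))" by (simp add: dual_op_def)
  also have "\<dots> = (\<lambda>x. h ((T^^i) (T x)))" by (simp add: Suc)
  also have "\<dots> = (\<lambda>x. h ((T^^Suc i) x))" by (simp add: funpow_Suc_right del: funpow.simps)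
  finally show ?case .
qed

lemma key_concrete:
  fixes T :: "(nat\<Rightarrow>'a::real_normed_field) \<Rightarrow> (nat\<Rightarrow>'a)"
  assumes lin: "klinear_op T" and cont: "continuous_on UNIV T" and ni: "no_fin_dim_dual_invariant T"
  shows "\<exists>D. \<forall>p c d. degree p \<ge> D \<longrightarrow> (\<forall>x. (\<Sum>j<N. c j * poly_op p T x j) = (\<Sum>j<N. d j * x j)) \<longrightarrow> (\<forall>j<N. c j = 0)"
proof -
  let ?E0 = "(\<lambda>j. \<lambda>x::nat\<Rightarrow>'a. x j) ` {..<N}"
  interpret K: keyloc "\<lambda>c f x. c * f x" "dual_op T" dual_space ?E0
  proof unfold_locales
    show "dual_op T (x + y) = dual_op T x + dual_op T y" for x y
      by (simp add: dual_op_def plus_fun_def)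
    show "dual_op T (\<lambda>xa. c * x xa) = (\<lambda>xa. c * dual_op T x xa)" for c x
      by (simp add: dual_op_def)
    show "VS.subspace dual_space" by (rule dual_space_subspace)
    show "dual_op T ` dual_space \<subseteq> dual_space" using dual_op_space[OF lin cont] by blast
    show "finite ?E0" by simp
    show "?E0 \<subseteq> dual_space" using coord_dual by blast
  next
    fix L F
    assume L: "VS.subspace L" "finite F" "L \<subseteq> VS.span F" "dual_op T ` L \<subseteq> L" "L \<subseteq> dual_space"
    have "dual_subspace L"
      using L(1,5) unfolding dual_subspace_def VS.subspace_def by (simp add: zero_fun_def plus_fun_def)
    moreover have "finite_dim L" unfolding finite_dim_def using L(2,3) VS_span_kspan by blast
    ultimately have "L = {(\<lambda>x. 0)}" using ni L(4) unfolding no_fin_dim_dual_invariant_def by blast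
    then show "L \<subseteq> {0}" by (simp add: zero_fun_def)
  qed
  obtain D where D: "\<forall>p h. degree p \<ge> D \<longrightarrow> h \<in> VS.span ?E0 \<longrightarrow> K.polyA p h \<in> VS.span ?E0 \<longrightarrow> h = 0"
    using K.key by blast
  have inspan: "(\<lambda>x. \<Sum>j<N. e j * x j) \<in> VS.span ?E0" for e
  proof -
    have "(\<lambda>x. \<Sum>j<N. e j * x j) = (\<Sum>j<N. (\<lambda>x. e j * x j))" by (simp add: fun_eq_iff sum_fun_app)
    moreover have "(\<Sum>j<N. (\<lambda>x::nat\<Rightarrow>'a. e j * x j)) \<in> VS.span ?E0"
    proof (rule VS.span_sum)
      fix j assume "j \<in> {..<N}"
      then have "(\<lambda>x::nat\<Rightarrow>'a. x j) \<in> VS.span ?E0" by (intro VS.span_base) auto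
      then show "(\<lambda>x::nat\<Rightarrow>'a. e j * x j) \<in> VS.span ?E0" using VS.span_scale[of _ ?E0 "e j"] by simp
    qed
    ultimately show ?thesis by simp
  qed
  have "\<forall>j<N. c j = 0" if deg: "degree p \<ge> D" and eq: "\<forall>x. (\<Sum>j<N. c j * poly_op p T x j) = (\<Sum>j<N. d j * x j)" for p c d
  proof -
    let ?h = "\<lambda>x. \<Sum>j<N. c j * x j"
    have "K.polyA p ?h = (\<lambda>x. \<Sum>i\<le>degree p. coeff p i * ?h ((T^^i) x))"
      unfolding K.polyA_def by (simp add: fun_eq_iff sum_fun_app dual_op_pow)
    also have "\<dots> = (\<lambda>x. \<Sum>j<N. c j * poly_op p T x j)"
      unfolding poly_op_def
      by (simp add: fun_eq_iff sum_distrib_left mult_ac sum.swap[of _ "{..<N}"])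
    also have "\<dots> = (\<lambda>x. \<Sum>j<N. d j * x j)" using eq by simp
    finally have "K.polyA p ?h \<in> VS.span ?E0" using inspan by simp
    then have h0: "?h = 0" using D deg inspan by blast
    show ?thesis
    proof (intro allI impI)
      fix j assume "j < N"
      have "?h (\<lambda>n. if n = j then 1 else 0) = c j"
        using \<open>j < N\<close> by (simp add: if_distrib cong: if_cong)
      moreover have "?h (\<lambda>n. if n = j then 1 else 0) = 0" using fun_cong[OF h0, of "\<lambda>n. if n = j then 1 else 0"] by simp
      ultimately show "c j = 0" by simp
    qed
  qed
  then show ?thesis by blast
qed

locale interp_setup =
  fixes Z :: "(nat \<Rightarrow> 'a::field) set" and \<phi> :: "nat \<Rightarrow> (nat \<Rightarrow> 'a) \<Rightarrow> 'a"
  assumes Z0: "(\<lambda>n. 0) \<in> Z"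
    and Zadd: "\<And>x y. x\<in>Z \<Longrightarrow> y\<in>Z \<Longrightarrow> (\<lambda>n. x n + y n) \<in> Z"
    and Zsc: "\<And>c x. x\<in>Z \<Longrightarrow> (\<lambda>n. c * x n) \<in> Z"
    and phadd: "\<And>j x y. x\<in>Z \<Longrightarrow> y\<in>Z \<Longrightarrow> \<phi> j (\<lambda>n. x n + y n) = \<phi> j x + \<phi> j y"
    and phsc: "\<And>j c x. x\<in>Z \<Longrightarrow> \<phi> j (\<lambda>n. c * x n) = c * \<phi> j x"
begin

lemma ph0: "\<phi> j (\<lambda>n. 0) = 0"
  using phsc[OF Z0, of j 0] by simp

lemma Zsum: "(\<And>i. i \<in> S \<Longrightarrow> g i \<in> Z) \<Longrightarrow> (\<lambda>n. \<Sum>i\<in>S. g i n) \<in> Z"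
proof (induction S rule: infinite_finite_induct)
  case (insert i S)
  then have "(\<lambda>n. g i n + (\<Sum>i\<in>S. g i n)) \<in> Z" using Zadd by blast
  then show ?case using insert by simp
qed (use Z0 in auto)

lemma phsum: "(\<And>i. i \<in> S \<Longrightarrow> g i \<in> Z) \<Longrightarrow> \<phi> j (\<lambda>n. \<Sum>i\<in>S. g i n) = (\<Sum>i\<in>S. \<phi> j (g i))"
proof (induction S rule: infinite_finite_induct)
  case (insert i S)
  have "\<phi> j (\<lambda>n. \<Sum>i\<in>insert i S. g i n) = \<phi> j (\<lambda>n. g i n + (\<Sum>i\<in>S. g i n))"
    using insert by simp
  also have "\<dots> = \<phi> j (g i) + \<phi> j (\<lambda>n. \<Sum>i\<in>S. g i n)"
  proof -
    have gi: "g i \<in> Z" using insert.prems by simp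
    have gS: "(\<lambda>n. \<Sum>i\<in>S. g i n) \<in> Z" using insert.prems by (intro Zsum) simp
    show ?thesis using phadd[OF gi gS] .
  qed
  finally show ?case using insert by simp
qed (use ph0 in auto)

lemma interp:
  "(\<forall>c. (\<forall>z\<in>Z. (\<Sum>j<m. c j * \<phi> j z) = 0) \<longrightarrow> (\<forall>j<m. c j = 0)) \<longrightarrow> (\<forall>t. \<exists>z\<in>Z. \<forall>j<m. \<phi> j z = t j)"
proof (induction m)
  case 0 then show ?case using Z0 by auto
next
  case (Suc m)
  show ?case
  proof (intro impI)
    assume ind: "\<forall>c. (\<forall>z\<in>Z. (\<Sum>j<Suc m. c j * \<phi> j z) = 0) \<longrightarrow> (\<forall>j<Suc m. c j = 0)"
    have "\<forall>c. (\<forall>z\<in>Z. (\<Sum>j<m. c j * \<phi> j z) = 0) \<longrightarrow> (\<forall>j<m. c j = 0)"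
    proof (intro allI impI)
      fix c j assume c: "\<forall>z\<in>Z. (\<Sum>j<m. c j * \<phi> j z) = 0" and "j < m"
      have "\<forall>z\<in>Z. (\<Sum>j<Suc m. (c(m := 0)) j * \<phi> j z) = 0"
      proof
        fix z assume "z \<in> Z"
        have "(\<Sum>j<Suc m. (c(m := 0)) j * \<phi> j z) = (\<Sum>j<m. (c(m := 0)) j * \<phi> j z)" by simp
        also have "\<dots> = (\<Sum>j<m. c j * \<phi> j z)" by (rule sum.cong) auto
        finally show "(\<Sum>j<Suc m. (c(m := 0)) j * \<phi> j z) = 0" using c \<open>z \<in> Z\<close> by simp
      qed
      then have "\<forall>j<Suc m. (c(m := 0)) j = 0" using ind by blast
      then have "(c(m := 0)) j = 0" using \<open>j < m\<close> less_SucI by blast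
      then show "c j = 0" using \<open>j < m\<close> by simp
    qed
    then obtain sol where sol: "\<And>t. sol t \<in> Z" "\<And>t j. j < m \<Longrightarrow> \<phi> j (sol t) = t j"
      using Suc.IH by metis
    show "\<forall>t. \<exists>z\<in>Z. \<forall>j<Suc m. \<phi> j z = t j"
    proof (cases "\<exists>z0\<in>Z. (\<forall>j<m. \<phi> j z0 = 0) \<and> \<phi> m z0 \<noteq> 0")
      case True
      then obtain z0 where z0: "z0 \<in> Z" "\<forall>j<m. \<phi> j z0 = 0" "\<phi> m z0 \<noteq> 0" by blast
      show ?thesis
      proof
        fix t
        let ?z1 = "sol t"
        let ?a = "(t m - \<phi> m ?z1) / \<phi> m z0"
        let ?z = "\<lambda>n. ?z1 n + ?a * z0 n"
        have zZ: "?z \<in> Z" using Zadd Zsc sol z0 by blast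
        have "\<phi> j ?z = \<phi> j ?z1 + ?a * \<phi> j z0" for j
          by (simp only: phadd[OF sol(1) Zsc[OF z0(1)]] phsc[OF z0(1)])
        then have "\<forall>j<Suc m. \<phi> j ?z = t j"
          using sol z0 by (auto simp: less_Suc_eq)
        then show "\<exists>z\<in>Z. \<forall>j<Suc m. \<phi> j z = t j" using zZ by blast
      qed
    next
      case False
      then have B: "\<And>z. z \<in> Z \<Longrightarrow> \<forall>j<m. \<phi> j z = 0 \<Longrightarrow> \<phi> m z = 0" by blast
      define zi where "zi i = sol (\<lambda>j. if j = i then 1 else 0)" for i
      have ziZ: "zi i \<in> Z" for i unfolding zi_def using sol by blast
      have zi: "j < m \<Longrightarrow> \<phi> j (zi i) = (if j = i then 1 else 0)" for i j unfolding zi_def using sol by simp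
      define c where "c j = (if j < m then - \<phi> m (zi j) else 1)" for j
      have "\<forall>z\<in>Z. (\<Sum>j<Suc m. c j * \<phi> j z) = 0"
      proof
        fix z assume zZ: "z \<in> Z"
        let ?s = "\<lambda>n. \<Sum>i<m. \<phi> i z * zi i n"
        have sZ: "?s \<in> Z" using Zsum[of "{..<m}" "\<lambda>i n. \<phi> i z * zi i n"] Zsc ziZ by blast
        let ?w = "\<lambda>n. z n + (-1) * ?s n"
        have wZ: "?w \<in> Z" using Zadd Zsc zZ sZ by blast
        have phs: "\<phi> j ?s = (\<Sum>i<m. \<phi> i z * \<phi> j (zi i))" for j
          using phsum[of "{..<m}" "\<lambda>i n. \<phi> i z * zi i n" j] Zsc ziZ phsc ziZ by simp
        have phw: "\<phi> j ?w = \<phi> j z - \<phi> j ?s" for j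
          by (simp only: phadd[OF zZ Zsc[OF sZ]] phsc[OF sZ]) simp
        have "\<forall>j<m. \<phi> j ?w = 0"
        proof (intro allI impI)
          fix j assume "j < m"
          then have "\<phi> j ?s = (\<Sum>i<m. \<phi> i z * (if j = i then 1 else 0))" using phs zi by simp
          also have "\<dots> = \<phi> j z" using \<open>j < m\<close> by (simp add: if_distrib cong: if_cong)
          finally show "\<phi> j ?w = 0" using phw by simp
        qed
        then have "\<phi> m ?w = 0" using B wZ by blast
        then have "\<phi> m z = (\<Sum>i<m. \<phi> i z * \<phi> m (zi i))" using phw phs by simp
        then show "(\<Sum>j<Suc m. c j * \<phi> j z) = 0"
          unfolding c_def by (simp add: sum_negf mult_ac)
      qed
      then have "c m = 0" using ind by blast
      then show ?thesis unfolding c_def by simp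
    qed
  qed
qed

end

lemma tendsto_fun_componentwise:
  "((f :: 'x \<Rightarrow> 'i \<Rightarrow> 'b::topological_space) \<longlongrightarrow> l) F \<longleftrightarrow> (\<forall>i. ((\<lambda>c. f c i) \<longlongrightarrow> l i) F)"
  using limitin_componentwise[of "\<lambda>i. euclidean" UNIV f l F] by (simp add: euclidean_product_topology)

lemma klinear_op_add: "klinear_op T \<Longrightarrow> T (\<lambda>n. x n + y n) = (\<lambda>n. T x n + T y n)"
  unfolding klinear_op_def by blast

lemma klinear_op_scale: "klinear_op T \<Longrightarrow> T (\<lambda>n. c * x n) = (\<lambda>n. c * T x n)"
  unfolding klinear_op_def by blast

lemma klinear_op_zero: "klinear_op T \<Longrightarrow> T (\<lambda>n. 0) = (\<lambda>n. 0)"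
proof -
  assume "klinear_op T"
  then have "T (\<lambda>n. 0 * (0::'a) ) = (\<lambda>n. 0 * T (\<lambda>n. 0) n)" using klinear_op_scale[of T 0 "\<lambda>n. 0"] by simp
  then show ?thesis by simp
qed

lemma klinear_op_pow: "klinear_op T \<Longrightarrow> klinear_op (T^^i)"
proof (induction i)
  case 0 then show ?case by (simp add: klinear_op_def)
next
  case (Suc i)
  then show ?case unfolding klinear_op_def by (simp add: klinear_op_add klinear_op_scale)
qed

lemma klinear_op_sum:
  assumes "klinear_op T"
  shows "T (\<lambda>n. \<Sum>i\<in>S. g i n) = (\<lambda>m. \<Sum>i\<in>S. T (g i) m)"
proof (induction S rule: infinite_finite_induct)
  case (insert i S)
  have "T (\<lambda>n. \<Sum>i\<in>insert i S. g i n) = T (\<lambda>n. g i n + (\<Sum>i\<in>S. g i n))" using insert by simp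
  also have "\<dots> = (\<lambda>m. T (g i) m + T (\<lambda>n. \<Sum>i\<in>S. g i n) m)" by (rule klinear_op_add[OF assms])
  finally show ?case using insert by simp
qed (use klinear_op_zero[OF assms] in auto)

lemma klinear_op_poly:
  fixes T :: "(nat \<Rightarrow> 'a::real_normed_field) \<Rightarrow> (nat \<Rightarrow> 'a)"
  assumes "klinear_op T" shows "klinear_op (poly_op p T)"
  unfolding klinear_op_def poly_op_def
  using klinear_op_pow[OF assms] 
  by (auto simp: fun_eq_iff klinear_op_add klinear_op_scale algebra_simps sum.distrib sum_distrib_left)

lemma cont_pow:
  assumes "continuous_on UNIV (T :: 'a::topological_space \<Rightarrow> 'a)"
  shows "continuous_on UNIV (T^^i)"
proof (induction i)
  case 0 show ?case by (simp add: id_def)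
next
  case (Suc i)
  have "continuous_on UNIV (T \<circ> (T^^i))"
    using continuous_on_compose[OF Suc] continuous_on_subset[OF assms] by blast
  then show ?case by simp
qed

lemma cont_poly:
  fixes T :: "(nat \<Rightarrow> 'a::real_normed_field) \<Rightarrow> (nat \<Rightarrow> 'a)"
  assumes "continuous_on UNIV T"
  shows "continuous_on UNIV (poly_op p T)"
  unfolding poly_op_def
proof (intro continuous_on_coordinatewise_then_product continuous_intros)
  fix m i
  show "continuous_on UNIV (\<lambda>x. (T ^^ i) x m)"
    using continuous_on_compose2[OF continuous_on_product_coordinates[of m] cont_pow[OF assms, of i]] by simp
qed

lemma dense_UNIV_iff: "closure S = (UNIV::'a::topological_space set) \<longleftrightarrow> (\<forall>U. open U \<longrightarrow> U \<noteq> {} \<longrightarrow> U \<inter> S \<noteq> {})"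
  by (metis Compl_disjoint2 boolean_algebra.conj_one_right
    boolean_algebra_class.boolean_algebra.compl_eq_compl_iff closed_closure
    open_Compl open_Int_closure_eq_empty)

lemma universal_from_transitive:
  fixes P :: "nat \<Rightarrow> 'a::polish_space \<Rightarrow> 'a"
  assumes cont: "\<And>k. continuous_on UNIV (P k)"
    and trans: "\<And>U V. open U \<Longrightarrow> open V \<Longrightarrow> U \<noteq> {} \<Longrightarrow> V \<noteq> {} \<Longrightarrow> \<exists>k. \<exists>y\<in>U. P k y \<in> V"
  shows "\<exists>x. closure {P k x | k. True} = UNIV"
proof -
  obtain \<B> :: "'a set set" where cB: "countable \<B>" and bB: "topological_basis \<B>"
    using ex_countable_basis by blast
  define G where "G B = {x. \<exists>k. P k x \<in> B}" for B
  have openG: "open (G B)" if "B \<in> \<B>" for B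
  proof -
    have "G B = (\<Union>k. P k -` B)" unfolding G_def by auto
    moreover have "open (P k -` B)" for k
      using cont[of k] that bB open_vimage topological_basis_open by blast
    ultimately show ?thesis by auto
  qed
  have denseG: "closure (G B) = UNIV" if B: "B \<in> \<B>" "B \<noteq> {}" for B
    unfolding dense_UNIV_iff
  proof (intro allI impI)
    fix U :: "'a set" assume "open U" "U \<noteq> {}"
    then obtain k y where "y \<in> U" "P k y \<in> B"
      using trans[of U B] B bB topological_basis_open by blast
    then show "U \<inter> G B \<noteq> {}" unfolding G_def by blast
  qed
  let ?\<G> = "G ` (\<B> - {{}})"
  have "Met_TC.mtopology closure_of \<Inter>?\<G> = (UNIV::'a set)"
  proof (rule Met_TC.metric_Baire_category)
    show "Met_TC.mcomplete TYPE('a)" using complete_UNIV by simp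
    show "countable ?\<G>" using cB by simp
    fix T assume "T \<in> ?\<G>"
    then show "openin Met_TC.mtopology T \<and> Met_TC.mtopology closure_of T = UNIV"
      using openG denseG by (auto simp: euclidean_closure_of)
  qed
  then have "closure (\<Inter>?\<G>) = UNIV" by (simp add: euclidean_closure_of)
  then obtain x where x: "x \<in> \<Inter>?\<G>" by (metis UNIV_I closure_empty empty_iff equals0I)
  show ?thesis
  proof (intro exI, unfold dense_UNIV_iff, intro allI impI)
    fix U :: "'a set" assume "open U" "U \<noteq> {}"
    then obtain B where "B \<in> \<B>" "B \<noteq> {}" "B \<subseteq> U"
      by (metis bB ex_in_conv topological_basisE)
    then have "x \<in> G B" using x by auto
    then show "U \<inter> {P k x | k. True} \<noteq> {}" unfolding G_def using \<open>B \<subseteq> U\<close> by blast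
  qed
qed

definition annih :: "((nat\<Rightarrow>'a::real_normed_field) \<Rightarrow> (nat\<Rightarrow>'a)) \<Rightarrow> ((nat\<Rightarrow>'a) \<Rightarrow> 'a) \<Rightarrow> 'a poly \<Rightarrow> bool" where
  "annih T f q \<longleftrightarrow> (\<forall>x. (\<Sum>i\<le>degree q. coeff q i * f ((T^^i) x)) = 0)"

lemma sum_deg_le:
  fixes q :: "'a::comm_ring_1 poly"
  assumes "degree q \<le> M"
  shows "(\<Sum>i\<le>M. coeff q i * s i) = (\<Sum>i\<le>degree q. coeff q i * s i)"
proof (rule sum.mono_neutral_right)
  show "finite {..M}" by simp
  show "{..degree q} \<subseteq> {..M}" using assms by auto
  show "\<forall>i\<in>{..M} - {..degree q}. coeff q i * s i = 0" by (auto simp: coeff_eq_0)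
qed

lemma kspan_VS: "kspan B \<subseteq> VS.span B"
proof
  fix f assume "f \<in> kspan B"
  then obtain F c where F: "finite F" "F \<subseteq> B" "f = (\<lambda>x. \<Sum>g\<in>F. c g * g x)"
    unfolding kspan_def by blast
  have "f = (\<Sum>g\<in>F. (\<lambda>x. c g * g x))" using F by (simp add: fun_eq_iff sum_fun_app)
  also have "\<dots> \<in> VS.span B"
    by (rule VS.span_sum) (use F in \<open>auto intro: VS.span_scale[of _ B, simplified] VS.span_base\<close>)
  finally show "f \<in> VS.span B" .
qed

lemma exists_annih:
  fixes T :: "(nat\<Rightarrow>'a::real_normed_field) \<Rightarrow> (nat\<Rightarrow>'a)"
  assumes fin: "finite_dim L" and inv: "dual_op T ` L \<subseteq> L" and fL: "f \<in> L"
  shows "\<exists>q. q \<noteq> 0 \<and> annih T f q"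
proof -
  obtain B where B: "finite B" "L \<subseteq> kspan B" using fin unfolding finite_dim_def by blast
  define g where "g i = (dual_op T ^^ i) f" for i
  have gL: "g i \<in> L" for i
    unfolding g_def by (induction i) (use fL inv in auto)
  have gx: "g i x = f ((T^^i) x)" for i x unfolding g_def dual_op_pow by simp
  have gspan: "range g \<subseteq> VS.span B" using gL B kspan_VS by blast
  show ?thesis
  proof (cases "inj g")
    case False
    then obtain i j where ij: "i < j" "g i = g j"
      unfolding inj_def by (metis linorder_neqE_nat)
    define q where "q = monom (1::'a) j - monom 1 i"
    have cq: "coeff q l = (if l = j then 1 else 0) - (if l = i then 1 else 0)" for l
      unfolding q_def by (simp add: coeff_diff)
    have "q \<noteq> 0" using cq[of j] ij by (metis less_irrefl coeff_0 one_neq_zero diff_zero)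
    have dq: "degree q \<le> j" by (rule degree_le) (use cq ij in auto)
    have "annih T f q" unfolding annih_def
    proof
      fix x
      have "(\<Sum>l\<le>degree q. coeff q l * f ((T^^l) x)) = (\<Sum>l\<le>j. coeff q l * f ((T^^l) x))"
        using sum_deg_le[OF dq] by simp
      also have "\<dots> = (\<Sum>l\<le>j. (if l = j then f ((T^^l) x) else 0) - (if l = i then f ((T^^l) x) else 0))"
        by (intro sum.cong refl) (simp add: cq left_diff_distrib)
      also have "\<dots> = f ((T^^j) x) - f ((T^^i) x)"
        using ij by (simp add: sum_subtractf)
      also have "\<dots> = 0" using ij(2) gx by (metis right_minus_eq)
      finally show "(\<Sum>l\<le>degree q. coeff q l * f ((T^^l) x)) = 0" .
    qed
    then show ?thesis using \<open>q \<noteq> 0\<close> by blast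
  next
    case True
    have "\<not> VS.independent (range g)"
    proof
      assume "VS.independent (range g)"
      then have "finite (range g)" using VS.independent_span_bound[OF B(1) _ gspan] by blast
      then show False using True finite_imageD by (metis infinite_UNIV_nat)
    qed
    then have "\<exists>t u. finite t \<and> t \<subseteq> range g \<and> (\<Sum>v\<in>t. (\<lambda>x. u v * v x)) = 0 \<and> (\<exists>v\<in>t. u v \<noteq> 0)"
      unfolding VS.dependent_explicit by (rule notnotD)
    then obtain t u where tu0: "finite t \<and> t \<subseteq> range g \<and> (\<Sum>v\<in>t. (\<lambda>x. u v * v x)) = 0 \<and> (\<exists>v\<in>t. u v \<noteq> 0)"
      by (elim exE) (rule that)
    then have tu: "finite t" "t \<subseteq> range g" "\<exists>v\<in>t. u v \<noteq> 0" "(\<Sum>v\<in>t. (\<lambda>x. u v * v x)) = 0"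
      by (simp_all only:)
    define I where "I = g -` t"
    have finI: "finite I" unfolding I_def using tu(1) True by (simp add: finite_vimageI)
    have gI: "g ` I = t" unfolding I_def using tu(2) by blast
    have injI: "inj_on g I" using True by (simp add: inj_on_def inj_def)
    define q where "q = (\<Sum>i\<in>I. monom (u (g i)) i)"
    have cq: "coeff q l = (if l \<in> I then u (g l) else 0)" for l
      unfolding q_def coeff_sum using finI by (simp add: if_distrib cong: if_cong)
    obtain v where v: "v \<in> t" "u v \<noteq> 0" using tu by blast
    then obtain i0 where "i0 \<in> I" "g i0 = v" using gI by blast
    then have "q \<noteq> 0" using cq[of i0] v by (metis coeff_0)
    have "I \<noteq> {}" using \<open>i0 \<in> I\<close> by blast
    define M where "M = Max I"
    have IM: "I \<subseteq> {..M}" unfolding M_def using finI by auto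
    have dq: "degree q \<le> M" by (rule degree_le) (use cq IM in \<open>auto simp: subset_eq\<close>)
    have "annih T f q" unfolding annih_def
    proof
      fix x
      have "(\<Sum>l\<le>degree q. coeff q l * f ((T^^l) x)) = (\<Sum>l\<le>M. coeff q l * f ((T^^l) x))"
        using sum_deg_le[OF dq] by simp
      also have "\<dots> = (\<Sum>l\<le>M. if l \<in> I then u (g l) * g l x else 0)"
        by (intro sum.cong refl) (simp add: cq gx)
      also have "\<dots> = (\<Sum>l\<in>{..M} \<inter> I. u (g l) * g l x)"
        by (simp add: sum.inter_restrict)
      also have "\<dots> = (\<Sum>l\<in>I. u (g l) * g l x)" using Int_absorb1[OF IM] by simp
      also have "\<dots> = (\<Sum>v\<in>t. u v * v x)"
        using sum.reindex[OF injI, of "\<lambda>v. u v * v x"] gI by simp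
      also have "\<dots> = (\<Sum>v\<in>t. (\<lambda>x. u v * v x)) x" by (simp add: sum_fun_app)
      also have "\<dots> = 0" using tu(4) by simp
      finally show "(\<Sum>l\<le>degree q. coeff q l * f ((T^^l) x)) = 0" .
    qed
    then show ?thesis using \<open>q \<noteq> 0\<close> by blast
  qed
qed

lemma no_eigen_dense:
  fixes S :: "'x::topological_space \<Rightarrow> 'x" and g :: "'x \<Rightarrow> complex"
  assumes dense: "closure {(S^^n) x0 | n. True} = UNIV"
    and cont: "continuous_on UNIV g"
    and eig: "\<And>y. g (S y) = lam * g y"
    and line: "\<And>t::real. \<exists>y. g y = complex_of_real t * z1"
    and z1: "z1 \<noteq> 0"
  shows False
proof -
  define c where "c = g x0"
  have orb: "g ((S^^n) x0) = lam^n * c" for n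
    unfolding c_def by (induction n) (auto simp: eig)
  define Orb where "Orb = {lam^n * c | n. True}"
  have sub: "g ` UNIV \<subseteq> closure Orb"
  proof -
    have "g ` closure {(S^^n) x0 | n. True} \<subseteq> closure Orb"
    proof (rule image_closure_subset)
      show "continuous_on (closure {(S^^n) x0 | n. True}) g" using cont continuous_on_subset by blast
      show "closed (closure Orb)" by simp
      have "g ` {(S^^n) x0 | n. True} \<subseteq> Orb" unfolding Orb_def using orb by auto
      then show "g ` {(S^^n) x0 | n. True} \<subseteq> closure Orb" using closure_subset by blast
    qed
    then show ?thesis using dense by simp
  qed
  have lineO: "complex_of_real t * z1 \<in> closure Orb" for t
  proof -
    obtain y where "g y = complex_of_real t * z1" using line[of t] by blast
    moreover have "g y \<in> g ` UNIV" by simp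
    ultimately show ?thesis using sub by (metis subsetD)
  qed
  show False
  proof (cases "norm lam \<le> 1")
    case True
    have "Orb \<subseteq> cball 0 (norm c)"
      unfolding Orb_def using True
      by (auto simp: norm_mult norm_power intro!: mult_left_le_one_le power_le_one)
    then have "closure Orb \<subseteq> cball 0 (norm c)" by (simp add: closure_minimal)
    moreover have "norm (complex_of_real ((norm c + 1) / norm z1) * z1) = norm c + 1"
    proof -
      have "norm (complex_of_real ((norm c + 1) / norm z1) * z1) = \<bar>(norm c + 1) / norm z1\<bar> * norm z1"
        by (simp only: norm_mult norm_of_real)
      also have "\<dots> = norm c + 1" using z1 by simp
      finally show ?thesis .
    qed
    ultimately show False using lineO[of "(norm c + 1) / norm z1"] by fastforce
  next
    case False
    then have lam1: "norm lam > 1" by simp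
    show False
    proof (cases "c = 0")
      case True
      then have "Orb = {0}" unfolding Orb_def by auto
      then show False using lineO[of 1] z1 by simp
    next
      case False
      obtain K where K: "norm z1 / norm c < norm lam ^ K" using real_arch_pow[OF lam1] by blast
      have big: "norm (lam^n * c) \<ge> norm z1" if "n \<ge> K" for n
      proof -
        have "norm lam ^ K \<le> norm lam ^ n" using that lam1 by (simp add: power_increasing)
        then have "norm z1 / norm c < norm lam ^ n" using K by linarith
        then show ?thesis using False by (simp add: norm_mult norm_power field_simps)
      qed
      define F where "F = (\<lambda>n. lam^n * c) ` {..<K}"
      have "Orb \<subseteq> F \<union> {w. norm w \<ge> norm z1}"
      proof
        fix w assume "w \<in> Orb"
        then obtain n where n: "w = lam^n * c" unfolding Orb_def by blast
        show "w \<in> F \<union> {w. norm w \<ge> norm z1}"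
        proof (cases "n < K")
          case True then show ?thesis unfolding F_def n by blast
        next
          case False then show ?thesis using big[of n] n by simp
        qed
      qed
      moreover have "closed (F \<union> {w. norm w \<ge> norm z1})"
        unfolding F_def by (intro closed_Un finite_imp_closed closed_Collect_le continuous_intros) auto
      ultimately have cl: "closure Orb \<subseteq> F \<union> {w. norm w \<ge> norm z1}" by (simp add: closure_minimal)
      have "(\<lambda>t. complex_of_real t * z1) ` {0<..<1} \<subseteq> F"
      proof
        fix w assume "w \<in> (\<lambda>t. complex_of_real t * z1) ` {0<..<1}"
        then obtain t where t: "t \<in> {0<..<1::real}" "w = complex_of_real t * z1" by blast
        have "norm w < norm z1" using t z1 by (simp add: norm_mult)
        then show "w \<in> F" using cl lineO[of t] t by fastforce
      qed
      moreover have "finite F" unfolding F_def by simp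
      moreover have "inj_on (\<lambda>t. complex_of_real t * z1) {0<..<1}"
        using z1 by (auto simp: inj_on_def)
      ultimately have "finite {0<..<1::real}"
        using finite_imageD finite_subset by blast
      then show False using infinite_Ioo[of "0::real" 1] by simp
    qed
  qed
qed

lemma one_imp_four:
  fixes T :: "(nat \<Rightarrow> 'a::{real_normed_field, polish_space}) \<Rightarrow> (nat \<Rightarrow> 'a)"
  assumes lin: "klinear_op T" and cont: "continuous_on UNIV T" and ni: "no_fin_dim_dual_invariant T"
  shows "poly_seq_dense T"
  unfolding poly_seq_dense_def
proof (intro allI impI)
  fix p :: "nat \<Rightarrow> 'a poly"
  assume deg: "filterlim (\<lambda>k. degree (p k)) at_top sequentially"
  have interpN: "\<exists>k y. (\<forall>j<N. y j = u j) \<and> (\<forall>j<N. poly_op (p k) T y j = v j)" for N u v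
  proof -
    obtain D where D: "\<forall>p c d. degree p \<ge> D \<longrightarrow> (\<forall>x. (\<Sum>j<N. c j * poly_op p T x j) = (\<Sum>j<N. d j * x j)) \<longrightarrow> (\<forall>j<N. c j = 0)"
      using key_concrete[OF lin cont ni, of N] by blast
    have "eventually (\<lambda>k. D \<le> degree (p k)) sequentially"
      using deg unfolding filterlim_at_top by blast
    then obtain k where k: "degree (p k) \<ge> D" using eventually_sequentially by auto
    define P where "P = poly_op (p k) T"
    have linP: "klinear_op P" unfolding P_def by (rule klinear_op_poly[OF lin])
    define Z where "Z = {z::nat\<Rightarrow>'a. \<forall>j<N. z j = 0}"
    interpret I: interp_setup Z "\<lambda>j z. P z j"
      by unfold_locales (auto simp: Z_def klinear_op_add[OF linP] klinear_op_scale[OF linP])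
    define \<delta> where "\<delta> i = (\<lambda>n::nat. if n = i then (1::'a) else 0)" for i
    have indep: "\<forall>c. (\<forall>z\<in>Z. (\<Sum>j<N. c j * P z j) = 0) \<longrightarrow> (\<forall>j<N. c j = 0)"
    proof (rule allI, rule impI)
      fix c assume H: "\<forall>z\<in>Z. (\<Sum>j<N. c j * P z j) = 0"
      define d where "d i = (\<Sum>j<N. c j * P (\<delta> i) j)" for i
      have "(\<Sum>j<N. c j * P x j) = (\<Sum>j<N. d j * x j)" for x
      proof -
        define x' where "x' = (\<lambda>n. \<Sum>i<N. x i * \<delta> i n)"
        define z where "z = (\<lambda>n. x n + (-1) * x' n)"
        have x'n: "x' n = (if n < N then x n else 0)" for n
          unfolding x'_def \<delta>_def by (simp add: if_distrib cong: if_cong)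
        have "z \<in> Z" unfolding Z_def z_def x'n by simp
        have xs: "x = (\<lambda>n. x' n + z n)" unfolding z_def by simp
        have Px: "P x j = P x' j + P z j" for j
          by (subst xs, simp only: klinear_op_add[OF linP])
        have Px': "P x' j = (\<Sum>i<N. x i * P (\<delta> i) j)" for j
          unfolding x'_def klinear_op_sum[OF linP] klinear_op_scale[OF linP] by simp
        have "(\<Sum>j<N. c j * P x j) = (\<Sum>j<N. c j * P x' j) + (\<Sum>j<N. c j * P z j)"
          unfolding Px by (simp add: algebra_simps sum.distrib)
        also have "(\<Sum>j<N. c j * P z j) = 0" using H \<open>z \<in> Z\<close> by blast
        also have "(\<Sum>j<N. c j * P x' j) = (\<Sum>j<N. d j * x j)"
        proof -
          have "(\<Sum>j<N. c j * P x' j) = (\<Sum>j<N. \<Sum>i<N. x i * (c j * P (\<delta> i) j))"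
            unfolding Px' sum_distrib_left by (intro sum.cong refl) (simp add: mult.left_commute)
          also have "\<dots> = (\<Sum>i<N. \<Sum>j<N. x i * (c j * P (\<delta> i) j))" by (rule sum.swap)
          also have "\<dots> = (\<Sum>i<N. d i * x i)" unfolding d_def sum_distrib_left[symmetric] by (simp add: mult.commute)
          finally show ?thesis .
        qed
        finally show ?thesis by simp
      qed
      then show "\<forall>j<N. c j = 0" using D k unfolding P_def by blast
    qed
    obtain z where z: "z \<in> Z" "\<forall>j<N. P z j = v j - P u j"
      using mp[OF I.interp[of N] indep, rule_format, of "\<lambda>j. v j - P u j"] by blast
    define y where "y = (\<lambda>n. u n + z n)"
    have "\<forall>j<N. y j = u j" using z unfolding y_def Z_def by simp
    moreover have "\<forall>j<N. P y j = v j" unfolding y_def klinear_op_add[OF linP] using z by simp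
    ultimately show ?thesis unfolding P_def by blast
  qed
  show "\<exists>x. closure {poly_op (p k) T x |k. True} = UNIV"
  proof (rule universal_from_transitive)
    show "continuous_on UNIV (poly_op (p k) T)" for k by (rule cont_poly[OF cont])
    fix U V :: "(nat \<Rightarrow> 'a) set"
    assume UV: "open U" "open V" "U \<noteq> {}" "V \<noteq> {}"
    then obtain u v where uv: "u \<in> U" "v \<in> V" by blast
    obtain kk yy where kk: "\<And>N. (\<forall>j<N. yy N j = u j) \<and> (\<forall>j<N. poly_op (p (kk N)) T (yy N) j = v j)"
      using interpN[of _ u v] by metis
    have "(yy \<longlongrightarrow> u) sequentially"
      unfolding tendsto_fun_componentwise
    proof
      fix j
      have "eventually (\<lambda>N. yy N j = u j) sequentially"
        unfolding eventually_sequentially using kk by (intro exI[of _ "Suc j"]) auto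
      then show "((\<lambda>N. yy N j) \<longlongrightarrow> u j) sequentially" by (rule tendsto_eventually)
    qed
    then have e1: "eventually (\<lambda>N. yy N \<in> U) sequentially" using UV uv topological_tendstoD by blast
    have "((\<lambda>N. poly_op (p (kk N)) T (yy N)) \<longlongrightarrow> v) sequentially"
      unfolding tendsto_fun_componentwise
    proof
      fix j
      have "eventually (\<lambda>N. poly_op (p (kk N)) T (yy N) j = v j) sequentially"
        unfolding eventually_sequentially using kk by (intro exI[of _ "Suc j"]) auto
      then show "((\<lambda>N. poly_op (p (kk N)) T (yy N) j) \<longlongrightarrow> v j) sequentially" by (rule tendsto_eventually)
    qed
    then have e2: "eventually (\<lambda>N. poly_op (p (kk N)) T (yy N) \<in> V) sequentially"
      using UV uv topological_tendstoD by blast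
    obtain N where "yy N \<in> U" "poly_op (p (kk N)) T (yy N) \<in> V"
      using eventually_happens'[OF sequentially_bot eventually_conj[OF e1 e2]] by blast
    then show "\<exists>k. \<exists>y\<in>U. poly_op (p k) T y \<in> V" by blast
  qed
qed

lemma hom_sum:
  assumes "\<And>a b. h (a + b) = h a + h b" "h 0 = 0"
  shows "h (\<Sum>i\<in>S. f i) = (\<Sum>i\<in>S. h (f i))"
  by (induction S rule: infinite_finite_induct) (auto simp: assms)

lemma two_imp_one_gen:
  fixes T :: "(nat\<Rightarrow>'a::real_normed_field) \<Rightarrow> (nat\<Rightarrow>'a)"
    and emb :: "'a \<Rightarrow> complex" and pr :: "complex \<Rightarrow> 'a"
  assumes lin: "klinear_op T" and cont: "continuous_on UNIV T" and hc: "hypercyclic T"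
    and emb_add: "\<And>a b. emb (a + b) = emb a + emb b"
    and emb_mult: "\<And>a b. emb (a * b) = emb a * emb b"
    and emb0: "emb 0 = 0" and emb_inj: "\<And>a. emb a = 0 \<Longrightarrow> a = 0"
    and emb_cont: "continuous_on UNIV emb"
    and emb_real: "\<And>t. emb (of_real t) = complex_of_real t"
    and pr_add: "\<And>z w. pr (z + w) = pr z + pr w"
    and pr_emb_mult: "\<And>a z. pr (emb a * z) = a * pr z"
    and pr_emb: "\<And>a. pr (emb a) = a"
  shows "no_fin_dim_dual_invariant T"
  unfolding no_fin_dim_dual_invariant_def
proof
  assume "\<exists>L. dual_subspace L \<and> finite_dim L \<and> L \<noteq> {(\<lambda>x. 0)} \<and> dual_op T ` L \<subseteq> L"
  then obtain L where L: "dual_subspace L" "finite_dim L" "L \<noteq> {(\<lambda>x. 0)}" "dual_op T ` L \<subseteq> L" by blast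
  obtain f where fL: "f \<in> L" and f0: "f \<noteq> (\<lambda>x. 0)"
    using L(1,3) unfolding dual_subspace_def by blast
  have fD: "f \<in> dual_space" using L(1) fL unfolding dual_subspace_def by blast
  then have flin: "klinear f" and fcont: "continuous_on UNIV f" unfolding dual_space_def by auto
  define Pm where "Pm m \<longleftrightarrow> (\<exists>q. q \<noteq> 0 \<and> degree q = m \<and> annih T f q)" for m
  have "\<exists>m. Pm m" using exists_annih[OF L(2) L(4) fL] unfolding Pm_def by blast
  define m where "m = (LEAST m. Pm m)"
  have "Pm m" unfolding m_def using \<open>\<exists>m. Pm m\<close> by (metis LeastI_ex)
  then obtain q where q: "q \<noteq> 0" "degree q = m" "annih T f q" unfolding Pm_def by blast
  have minimal: "degree r \<ge> m" if "r \<noteq> 0" "annih T f r" for r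
  proof (rule ccontr)
    assume "\<not> degree r \<ge> m"
    then have "degree r < m" by simp
    then have "\<not> Pm (degree r)" unfolding m_def by (rule not_less_Least)
    moreover have "Pm (degree r)" unfolding Pm_def using that by blast
    ultimately show False by blast
  qed
  have m1: "m \<ge> 1"
  proof (rule ccontr)
    assume "\<not> m \<ge> 1"
    then have "m = 0" by simp
    then have "coeff q 0 * f x = 0" for x using q(3) q(2) unfolding annih_def by auto
    moreover have "coeff q 0 \<noteq> 0" using q \<open>m = 0\<close> by (metis leading_coeff_0_iff)
    ultimately have "f = (\<lambda>x. 0)" by auto
    then show False using f0 by simp
  qed
  define cq where "cq = map_poly emb q"
  have coeff_cq: "coeff cq i = emb (coeff q i)" for i unfolding cq_def by (simp add: coeff_map_poly emb0)
  have deg_cq: "degree cq = m" unfolding cq_def using q(2) degree_map_poly[of emb q] emb_inj by blast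
  have "\<not> constant (poly cq)" using deg_cq m1 constant_degree[of cq] by simp
  then obtain lam where "poly cq lam = 0" using fundamental_theorem_of_algebra by blast
  then obtain r where r: "cq = [:-lam, 1:] * r" using poly_eq_0_iff_dvd by (metis dvdE)
  have "cq \<noteq> 0" using deg_cq m1 by auto
  then have "r \<noteq> 0" using r by auto
  have d1: "degree [:-lam, 1:] = 1" by simp
  have "degree ([:-lam, 1:] * r) = degree [:-lam,1:] + degree r"
    by (rule degree_mult_eq) (simp_all add: \<open>r \<noteq> 0\<close>)
  then have "degree cq = 1 + degree r" using r d1 by (simp only:)
  then have deg_r: "degree r = m - 1" using deg_cq by simp
  obtain m' where m': "m = Suc m'" using m1 by (cases m) auto
  have cq_split: "cq = smult (-lam) r + pCons 0 r" using r by simp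
  define s where "s y i = emb (f ((T^^i) y))" for y i
  define g where "g y = (\<Sum>i\<le>m. coeff r i * s y i)" for y
  have sT: "s (T y) i = s y (Suc i)" for y i
    unfolding s_def by (simp add: funpow_Suc_right del: funpow.simps)
  have E1: "(\<Sum>i\<le>m. coeff cq i * s y i) = 0" for y
  proof -
    have "(\<Sum>i\<le>m. coeff cq i * s y i) = emb (\<Sum>i\<le>m. coeff q i * f ((T^^i) y))"
      unfolding coeff_cq s_def by (simp add: hom_sum[of emb, OF emb_add emb0] emb_mult)
    also have "\<dots> = 0" using q(2,3) emb0 unfolding annih_def by simp
    finally show ?thesis .
  qed
  have E2: "(\<Sum>i\<le>m. coeff cq i * s y i) = - lam * g y + (\<Sum>i\<le>m. coeff (pCons 0 r) i * s y i)" for y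
  proof -
    have "(\<Sum>i\<le>m. coeff cq i * s y i) = (\<Sum>i\<le>m. (- lam) * (coeff r i * s y i) + coeff (pCons 0 r) i * s y i)"
      unfolding cq_split by (intro sum.cong refl) (simp add: algebra_simps)
    also have "\<dots> = - lam * g y + (\<Sum>i\<le>m. coeff (pCons 0 r) i * s y i)"
      unfolding g_def sum.distrib sum_distrib_left[symmetric] by simp
    finally show ?thesis .
  qed
  have E3: "(\<Sum>i\<le>m. coeff (pCons 0 r) i * s y i) = g (T y)" for y
  proof -
    have "(\<Sum>i\<le>m. coeff (pCons 0 r) i * s y i) = (\<Sum>i\<le>m'. coeff r i * s y (Suc i))"
      unfolding m' sum.atMost_Suc_shift by simp
    also have "\<dots> = (\<Sum>i\<le>m. coeff r i * s y (Suc i))"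
      unfolding m' using deg_r m' by (simp add: coeff_eq_0)
    finally show ?thesis unfolding g_def sT .
  qed
  have eig: "g (T y) = lam * g y" for y using E1[of y] E2[of y] E3[of y] by (simp add: algebra_simps)
  have "\<exists>y1. g y1 \<noteq> 0"
  proof (rule ccontr)
    assume "\<not> (\<exists>y1. g y1 \<noteq> 0)"
    then have g0: "g y = 0" for y by blast
    define rr where "rr = map_poly pr r"
    have pr0: "pr 0 = 0" using pr_add[of 0 0] by simp
    have coeff_rr: "coeff rr i = pr (coeff r i)" for i unfolding rr_def by (simp add: coeff_map_poly pr0)
    have "lead_coeff cq = lead_coeff r" unfolding r by (simp only: lead_coeff_mult) simp
    moreover have "lead_coeff cq = emb (lead_coeff q)" using deg_cq q(2) coeff_cq by simp
    ultimately have "pr (lead_coeff r) = lead_coeff q" using pr_emb by metis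
    then have "coeff rr (degree r) \<noteq> 0" using coeff_rr q(1) by simp
    then have "rr \<noteq> 0" by auto
    have drr: "degree rr \<le> m - 1" by (rule degree_le) (simp add: coeff_rr coeff_eq_0 deg_r pr0)
    have "annih T f rr" unfolding annih_def
    proof
      fix x
      have "(\<Sum>i\<le>degree rr. coeff rr i * f ((T^^i) x)) = (\<Sum>i\<le>m. coeff rr i * f ((T^^i) x))"
        using sum_deg_le[of rr m] drr by simp
      also have "\<dots> = pr (g x)"
        unfolding g_def s_def coeff_rr hom_sum[of pr, OF pr_add pr0]
        by (simp add: mult.commute[of "coeff r _"] pr_emb_mult mult.commute[of "pr _"])
      also have "\<dots> = 0" using g0 pr0 by simp
      finally show "(\<Sum>i\<le>degree rr. coeff rr i * f ((T^^i) x)) = 0" .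
    qed
    then have "degree rr \<ge> m" using minimal \<open>rr \<noteq> 0\<close> by blast
    then show False using drr m1 by simp
  qed
  then obtain y1 where y1: "g y1 \<noteq> 0" by blast
  have line: "\<exists>y. g y = complex_of_real t * g y1" for t
  proof
    have Tl: "klinear_op (T^^i)" for i using klinear_op_pow[OF lin] .
    have "s (\<lambda>n. of_real t * y1 n) i = complex_of_real t * s y1 i" for i
      unfolding s_def klinear_op_scale[OF Tl] klinear_scale[OF flin] emb_mult emb_real ..
    then show "g (\<lambda>n. of_real t * y1 n) = complex_of_real t * g y1"
      unfolding g_def by (simp add: sum_distrib_left mult_ac)
  qed
  have gcont: "continuous_on UNIV g"
    unfolding g_def s_def
  proof (intro continuous_intros)
    fix i
    have "continuous_on UNIV (\<lambda>y. f ((T^^i) y))"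
      using continuous_on_compose2[OF fcont cont_pow[OF cont, of i]] by simp
    then show "continuous_on UNIV (\<lambda>y. emb (f ((T^^i) y)))"
      using continuous_on_compose2[OF emb_cont] by blast
  qed
  obtain x0 where x0: "closure {(T^^n) x0 | n. True} = UNIV" using hc unfolding hypercyclic_def by blast
  show False using no_eigen_dense[OF x0 gcont eig line y1] .
qed

lemma poly_op_monom1:
  fixes T :: "(nat\<Rightarrow>'a::real_normed_field) \<Rightarrow> (nat\<Rightarrow>'a)"
  shows "poly_op (monom 1 n) T x = (T^^n) x"
proof -
  have "(\<Sum>i\<le>n. coeff (monom (1::'a) n) i * (T^^i) x m) = (\<Sum>i\<le>n. if i = n then (T^^i) x m else 0)" for m
    by (intro sum.cong) auto
  then show ?thesis by (simp add: fun_eq_iff poly_op_def degree_monom_eq)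
qed

lemma four_imp_three:
  fixes T :: "(nat\<Rightarrow>'a::real_normed_field) \<Rightarrow> (nat\<Rightarrow>'a)"
  assumes "poly_seq_dense T"
  shows "hereditarily_hypercyclic T"
  unfolding hereditarily_hypercyclic_def
proof (intro allI impI)
  fix A :: "nat set" assume A: "infinite A"
  define p where "p k = (monom (1::'a) (enumerate A k))" for k
  have "degree (p k) = enumerate A k" for k unfolding p_def by (simp add: degree_monom_eq)
  then have "filterlim (\<lambda>k. degree (p k)) at_top sequentially"
    using filterlim_subseq[OF strict_mono_enumerate[OF A]] by simp
  then obtain x where x: "closure {poly_op (p k) T x | k. True} = UNIV"
    using assms unfolding poly_seq_dense_def by blast
  have "{poly_op (p k) T x | k. True} = (\<lambda>n. (T^^n) x) ` range (enumerate A)"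
    unfolding p_def poly_op_monom1 by auto
  also have "\<dots> = (\<lambda>n. (T^^n) x) ` A" using range_enumerate[OF A] by simp
  also have "\<dots> = {(T^^n) x | n. n \<in> A}" by auto
  finally have "{poly_op (p k) T x | k. True} = {(T^^n) x | n. n \<in> A}" .
  then show "\<exists>x. closure {(T^^n) x | n. n \<in> A} = UNIV" using x by auto
qed

lemma three_imp_two:
  assumes "hereditarily_hypercyclic T" shows "hypercyclic T"
  using assms[unfolded hereditarily_hypercyclic_def, rule_format, of UNIV] unfolding hypercyclic_def by simp

lemma two_imp_one_real:
  fixes T :: "(nat\<Rightarrow>real) \<Rightarrow> (nat\<Rightarrow>real)"
  assumes "klinear_op T" "continuous_on UNIV T" "hypercyclic T"
  shows "no_fin_dim_dual_invariant T"
  by (rule two_imp_one_gen[OF assms, where emb = complex_of_real and pr = Re])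
     (auto intro: continuous_intros)

lemma two_imp_one_complex:
  fixes T :: "(nat\<Rightarrow>complex) \<Rightarrow> (nat\<Rightarrow>complex)"
  assumes "klinear_op T" "continuous_on UNIV T" "hypercyclic T"
  shows "no_fin_dim_dual_invariant T"
  by (rule two_imp_one_gen[OF assms, where emb = "\<lambda>z. z" and pr = "\<lambda>z. z"])
     (auto intro: continuous_intros)

theorem corollary1p2:
  shows "(\<forall>T :: (nat \<Rightarrow> real) \<Rightarrow> (nat \<Rightarrow> real).
            klinear_op T \<and> continuous_on UNIV T \<longrightarrow>
            (no_fin_dim_dual_invariant T \<longleftrightarrow> hypercyclic T) \<and>
            (hypercyclic T \<longleftrightarrow> hereditarily_hypercyclic T) \<and>
            (hereditarily_hypercyclic T \<longleftrightarrow> poly_seq_dense T))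
       \<and> (\<forall>T :: (nat \<Rightarrow> complex) \<Rightarrow> (nat \<Rightarrow> complex).
            klinear_op T \<and> continuous_on UNIV T \<longrightarrow>
            (no_fin_dim_dual_invariant T \<longleftrightarrow> hypercyclic T) \<and>
            (hypercyclic T \<longleftrightarrow> hereditarily_hypercyclic T) \<and>
            (hereditarily_hypercyclic T \<longleftrightarrow> poly_seq_dense T))"
proof (intro conjI allI impI)
  fix T :: "(nat \<Rightarrow> real) \<Rightarrow> (nat \<Rightarrow> real)"
  assume a: "klinear_op T \<and> continuous_on UNIV T"
  have 14: "no_fin_dim_dual_invariant T \<Longrightarrow> poly_seq_dense T" using one_imp_four a by blast
  have 43: "poly_seq_dense T \<Longrightarrow> hereditarily_hypercyclic T" by (rule four_imp_three)
  have 32: "hereditarily_hypercyclic T \<Longrightarrow> hypercyclic T" by (rule three_imp_two)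
  have 21: "hypercyclic T \<Longrightarrow> no_fin_dim_dual_invariant T" using two_imp_one_real a by blast
  show "no_fin_dim_dual_invariant T \<longleftrightarrow> hypercyclic T" using 14 43 32 21 by blast
  show "hypercyclic T \<longleftrightarrow> hereditarily_hypercyclic T" using 14 43 32 21 by blast
  show "hereditarily_hypercyclic T \<longleftrightarrow> poly_seq_dense T" using 14 43 32 21 by blast
next
  fix T :: "(nat \<Rightarrow> complex) \<Rightarrow> (nat \<Rightarrow> complex)"
  assume a: "klinear_op T \<and> continuous_on UNIV T"
  have 14: "no_fin_dim_dual_invariant T \<Longrightarrow> poly_seq_dense T" using one_imp_four a by blast
  have 43: "poly_seq_dense T \<Longrightarrow> hereditarily_hypercyclic T" by (rule four_imp_three)
  have 32: "hereditarily_hypercyclic T \<Longrightarrow> hypercyclic T" by (rule three_imp_two)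
  have 21: "hypercyclic T \<Longrightarrow> no_fin_dim_dual_invariant T" using two_imp_one_complex a by blast
  show "no_fin_dim_dual_invariant T \<longleftrightarrow> hypercyclic T" using 14 43 32 21 by blast
  show "hypercyclic T \<longleftrightarrow> hereditarily_hypercyclic T" using 14 43 32 21 by blast
  show "hereditarily_hypercyclic T \<longleftrightarrow> poly_seq_dense T" using 14 43 32 21 by blast
qed

end
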